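(* Let $\mu$ be a $\sigma$-finite signed measure on a measurable space $(\Omega,\mathcal B)$ and let $\Omega^+,\Omega^-\in\mathcal B$ be a Hahn decomposition for $\mu$, i.e. $\Omega^+\cap\Omega^-=\emptyset$, $\Omega^+\cup\Omega^-=\Omega$, $\mu(A)\ge0$ for all measurable $A\subset\Omega^+$ and $\mu(A)\le0$ for all measurable $A\subset\Omega^-$. Let $\nu$ be another $\sigma$-finite signed measure on $(\Omega,\mathcal B)$ and define $\nu'(A)=\nu(A\cap\Omega^+)-\nu(A\cap\Omega^-)$ for $A\in\mathcal B$. Then $\nu'$ is a $\sigma$-finite signed measure on $(\Omega,\mathcal B)$, and $\nu$ satisfies $(\mathcal L)$ with respect to $\mu$ if and only if $\nu'$ satisfies $(\mathcal L)$ with respect to $|\mu|$; likewise $\nu$ satisfies $(\mathcal O)$ with respect to $\mu$ if and only if $\nu'$ satisfies $(\mathcal O)$ with respect to $|\mu|$.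
   Context: A $\sigma$-finite signed measure on $(\Omega,\mathcal B)$ is a countably additive extended-real-valued set function vanishing on $\emptyset$, taking at most one of the values $+\infty,-\infty$, whose total variation $|\mu|$ is $\sigma$-finite. Given $\sigma$-finite signed measures $\mu,\nu$, $\nu$ satisfies $(\mathcal L)$ with respect to $\mu$ if for all $A,B\in\mathcal B$ with $\mu(A)=\mu(B)\neq\pm\infty$ one has $\nu(A)=\nu(B)\neq\pm\infty$; $\nu$ satisfies $(\mathcal O)$ with respect to $\mu$ if it satisfies $(\mathcal L)$ and for all $A,B\in\mathcal B$ with $\mu(A)\le\mu(B)$ one has $\nu(A)\le\nu(B)$.
   Formalization: The values $\nu(A\cap\Omega^+)$ and $\nu(A\cap\Omega^-)$ are also assumed never to be both infinite for the same $A\in\mathcal B$, so $\nu'(A)$ never has the form infinity minus infinity. The statement above fails without it. *)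

theory Defs
  imports "HOL-Analysis.Analysis"
begin

text \<open>A measurable space is represented by a measure M; only space M and sets M are used.
  Signed measures are extended-real valued set functions on sets M.\<close>

definition signed_measure :: "'a measure \<Rightarrow> ('a set \<Rightarrow> ereal) \<Rightarrow> bool" where
  "signed_measure M \<mu> \<longleftrightarrow>
     \<mu> {} = 0 \<and>
     (\<not> (\<exists>A\<in>sets M. \<mu> A = \<infinity>) \<or> \<not> (\<exists>A\<in>sets M. \<mu> A = -\<infinity>)) \<and>
     (\<forall>A :: nat \<Rightarrow> 'a set. range A \<subseteq> sets M \<longrightarrow> disjoint_family A \<longrightarrow>
        (\<lambda>n. \<mu> (A n)) sums \<mu> (\<Union>n. A n))"

definition total_variation :: "'a measure \<Rightarrow> ('a set \<Rightarrow> ereal) \<Rightarrow> 'a set \<Rightarrow> ereal" where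
  "total_variation M \<mu> A =
     (SUP P \<in> {P. finite P \<and> P \<subseteq> sets M \<and> disjoint P \<and> \<Union>P \<subseteq> A}. \<Sum>B\<in>P. \<bar>\<mu> B\<bar>)"

definition sigma_finite_signed_measure :: "'a measure \<Rightarrow> ('a set \<Rightarrow> ereal) \<Rightarrow> bool" where
  "sigma_finite_signed_measure M \<mu> \<longleftrightarrow>
     signed_measure M \<mu> \<and>
     (\<exists>C :: nat \<Rightarrow> 'a set. range C \<subseteq> sets M \<and> (\<Union>n. C n) = space M \<and>
        (\<forall>n. total_variation M \<mu> (C n) < \<infinity>))"

definition hahn_decomposition :: "'a measure \<Rightarrow> ('a set \<Rightarrow> ereal) \<Rightarrow> 'a set \<Rightarrow> 'a set \<Rightarrow> bool" where
  "hahn_decomposition M \<mu> P N \<longleftrightarrow>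
     P \<in> sets M \<and> N \<in> sets M \<and> P \<inter> N = {} \<and> P \<union> N = space M \<and>
     (\<forall>A\<in>sets M. A \<subseteq> P \<longrightarrow> \<mu> A \<ge> 0) \<and>
     (\<forall>A\<in>sets M. A \<subseteq> N \<longrightarrow> \<mu> A \<le> 0)"

definition cond_L :: "'a measure \<Rightarrow> ('a set \<Rightarrow> ereal) \<Rightarrow> ('a set \<Rightarrow> ereal) \<Rightarrow> bool" where
  "cond_L M \<mu> \<nu> \<longleftrightarrow>
     (\<forall>A\<in>sets M. \<forall>B\<in>sets M. \<mu> A = \<mu> B \<and> \<bar>\<mu> A\<bar> \<noteq> \<infinity> \<longrightarrow>
        \<nu> A = \<nu> B \<and> \<bar>\<nu> A\<bar> \<noteq> \<infinity>)"

definition cond_O :: "'a measure \<Rightarrow> ('a set \<Rightarrow> ereal) \<Rightarrow> ('a set \<Rightarrow> ereal) \<Rightarrow> bool" where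
  "cond_O M \<mu> \<nu> \<longleftrightarrow>
     cond_L M \<mu> \<nu> \<and> (\<forall>A\<in>sets M. \<forall>B\<in>sets M. \<mu> A \<le> \<mu> B \<longrightarrow> \<nu> A \<le> \<nu> B)"

end

theory Submission imports Defs begin

lemma sm_add:
  assumes sm: "signed_measure M f" and X: "X \<in> sets M" and Y: "Y \<in> sets M" and d: "X \<inter> Y = {}"
  shows "f (X \<union> Y) = f X + f Y"
proof -
  define A where "A = (\<lambda>n::nat. if n = 0 then X else if n = 1 then Y else {})"
  have r: "range A \<subseteq> sets M" using X Y by (auto simp: A_def)
  have dj: "disjoint_family A" using d by (auto simp: A_def disjoint_family_on_def)
  have f0: "f {} = 0" using sm by (simp add: signed_measure_def)
  have "(\<lambda>n. f (A n)) sums f (\<Union>n. A n)" using sm r dj by (simp add: signed_measure_def)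
  moreover have "(\<Union>n. A n) = X \<union> Y" by (auto simp: A_def split: if_splits)
  ultimately have "(\<lambda>n. \<Sum>i<n. f (A i)) \<longlonglongrightarrow> f (X \<union> Y)" by (simp add: sums_def)
  hence "(\<lambda>n. \<Sum>i<n + 2. f (A i)) \<longlonglongrightarrow> f (X \<union> Y)" by (rule LIMSEQ_ignore_initial_segment)
  moreover have "(\<Sum>i<n + 2. f (A i)) = f X + f Y" for n
    by (induction n) (auto simp: A_def f0)
  ultimately show ?thesis by (simp add: LIMSEQ_const_iff)
qed

lemma alg_L1: fixes p1 p2 n1 n2 :: ereal
  assumes "p1 \<ge> 0" "p2 \<ge> 0" "n1 \<le> 0" "n2 \<le> 0" "p1 - n1 = p2 - n2" "\<bar>p1 - n1\<bar> \<noteq> \<infinity>"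
  shows "p1 + n2 = p2 + n1 \<and> \<bar>p1 + n2\<bar> \<noteq> \<infinity>"
  using assms by (cases p1; cases p2; cases n1; cases n2) auto

lemma alg_L2: fixes q1 q2 r1 r2 :: ereal
  assumes "q1 + r2 = q2 + r1" "\<bar>q1 + r2\<bar> \<noteq> \<infinity>"
  shows "q1 - r1 = q2 - r2 \<and> \<bar>q1 - r1\<bar> \<noteq> \<infinity>"
  using assms by (cases q1; cases q2; cases r1; cases r2) auto

lemma alg_L3: fixes p1 p2 n1 n2 :: ereal
  assumes "p1 \<ge> 0" "p2 \<ge> 0" "n1 \<le> 0" "n2 \<le> 0" "p1 + n1 = p2 + n2" "\<bar>p1 + n1\<bar> \<noteq> \<infinity>"
  shows "p1 - n2 = p2 - n1 \<and> \<bar>p1 - n2\<bar> \<noteq> \<infinity>"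
  using assms by (cases p1; cases p2; cases n1; cases n2) auto

lemma alg_L4: fixes q1 q2 r1 r2 :: ereal
  assumes "q1 - r2 = q2 - r1" "\<bar>q1 - r2\<bar> \<noteq> \<infinity>"
  shows "q1 + r1 = q2 + r2 \<and> \<bar>q1 + r1\<bar> \<noteq> \<infinity>"
  using assms by (cases q1; cases q2; cases r1; cases r2) auto

lemma alg_O1: fixes p1 p2 n1 n2 :: ereal
  assumes "p1 \<ge> 0" "p2 \<ge> 0" "n1 \<le> 0" "n2 \<le> 0" "p1 + n1 \<le> p2 + n2"
  shows "p1 - n2 \<le> p2 - n1"
  using assms by (cases p1; cases p2; cases n1; cases n2) auto

lemma alg_O2: fixes q1 q2 r1 r2 :: ereal
  assumes "(q1 \<noteq> \<infinity> \<and> q2 \<noteq> \<infinity> \<and> r1 \<noteq> \<infinity> \<and> r2 \<noteq> \<infinity>) \<or> (q1 \<noteq> -\<infinity> \<and> q2 \<noteq> -\<infinity> \<and> r1 \<noteq> -\<infinity> \<and> r2 \<noteq> -\<infinity>)"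
    "\<not> (\<bar>q1\<bar> = \<infinity> \<and> \<bar>r1\<bar> = \<infinity>)" "\<not> (\<bar>q2\<bar> = \<infinity> \<and> \<bar>r2\<bar> = \<infinity>)"
    "q1 - r2 \<le> q2 - r1"
  shows "q1 + r1 \<le> q2 + r2"
  using assms by (cases q1; cases q2; cases r1; cases r2) auto

lemma alg_O3: fixes p1 p2 n1 n2 :: ereal
  assumes "p1 \<ge> 0" "p2 \<ge> 0" "n1 \<le> 0" "n2 \<le> 0"
    "(p1 \<noteq> \<infinity> \<and> p2 \<noteq> \<infinity> \<and> n1 \<noteq> \<infinity> \<and> n2 \<noteq> \<infinity>) \<or> (p1 \<noteq> -\<infinity> \<and> p2 \<noteq> -\<infinity> \<and> n1 \<noteq> -\<infinity> \<and> n2 \<noteq> -\<infinity>)"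
    "p1 - n1 \<le> p2 - n2"
  shows "p1 + n2 \<le> p2 + n1"
  using assms by (cases p1; cases p2; cases n1; cases n2) auto

lemma alg_O4: fixes q1 q2 r1 r2 :: ereal
  assumes "(q1 \<noteq> \<infinity> \<and> q2 \<noteq> \<infinity> \<and> r1 \<noteq> \<infinity> \<and> r2 \<noteq> \<infinity>) \<or> (q1 \<noteq> -\<infinity> \<and> q2 \<noteq> -\<infinity> \<and> r1 \<noteq> -\<infinity> \<and> r2 \<noteq> -\<infinity>)"
    "\<not> (\<bar>q1\<bar> = \<infinity> \<and> \<bar>r1\<bar> = \<infinity>)" "\<not> (\<bar>q2\<bar> = \<infinity> \<and> \<bar>r2\<bar> = \<infinity>)"
    "q1 + r2 \<le> q2 + r1"
  shows "q1 - r1 \<le> q2 - r2"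
  using assms by (cases q1; cases q2; cases r1; cases r2) auto

lemma alg_abs1: fixes p n :: ereal
  assumes "p \<ge> 0" "n \<le> 0" shows "\<bar>p + n\<bar> \<le> p + - n" and "\<bar>p\<bar> + \<bar>n\<bar> = p - n"
  using assms by (cases p; cases n; auto)+

lemma alg_neg: fixes a b :: ereal assumes "a \<le> 0" "b \<le> 0" shows "- (a + b) = - a + - b"
  using assms by (cases a; cases b) auto

lemma alg_tri: fixes x y :: ereal shows "\<bar>x - y\<bar> \<le> \<bar>x\<bar> + \<bar>y\<bar>"
  by (cases x; cases y) auto

definition addf :: "'a measure \<Rightarrow> ('a set \<Rightarrow> ereal) \<Rightarrow> bool" where
  "addf M f \<longleftrightarrow> f {} = 0 \<and> (\<forall>X\<in>sets M. \<forall>Y\<in>sets M. X \<inter> Y = {} \<longrightarrow> f (X \<union> Y) = f X + f Y)"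

lemma addf_sum_nat:
  fixes A :: "nat \<Rightarrow> 'a set"
  assumes "addf M f" "range A \<subseteq> sets M" "disjoint_family A"
  shows "(\<Sum>i<n. f (A i)) = f (\<Union>i<n. A i)"
proof (induction n)
  case 0 then show ?case using assms(1) by (simp add: addf_def)
next
  case (Suc n)
  have m: "(\<Union>i<n. A i) \<in> sets M" using assms(2) by auto
  have d: "(\<Union>i<n. A i) \<inter> A n = {}"
  proof -
    have "A i \<inter> A n = {}" if "i < n" for i using assms(3) that by (simp add: disjoint_family_on_def)
    thus ?thesis by auto
  qed
  have "(\<Union>i<Suc n. A i) = (\<Union>i<n. A i) \<union> A n" by (auto simp: lessThan_Suc)
  then show ?case using Suc assms(1,2) m d by (auto simp: addf_def)
qed

lemma addf_sum_set:
  assumes "addf M f" "finite F" "F \<subseteq> sets M" "disjoint F"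
  shows "(\<Sum>B\<in>F. f B) = f (\<Union>F)"
  using assms(2,3,4)
proof (induction F rule: finite_induct)
  case empty then show ?case using assms(1) by (simp add: addf_def)
next
  case (insert b F)
  have dF: "disjoint F" using insert.prems(2) by (simp add: pairwise_insert)
  have m: "\<Union>F \<in> sets M" using insert by auto
  have d: "b \<inter> \<Union>F = {}" using insert.prems(2) insert.hyps(2)
    by (auto simp: pairwise_insert disjnt_def)
  show ?case using insert dF m d assms(1) by (auto simp: addf_def)
qed

lemma addf_mono:
  assumes "addf M f" "X \<in> sets M" "Y \<in> sets M" "X \<subseteq> Y" "f (Y - X) \<ge> 0"
  shows "f X \<le> f Y"
proof -
  have "f Y = f (X \<union> (Y - X))" using assms(4) by (simp add: Un_absorb1)
  also have "\<dots> = f X + f (Y - X)" using assms sets.Diff[OF assms(3,2)] unfolding addf_def by blast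
  finally show ?thesis using assms(5) by (simp add: add_increasing2)
qed

lemma TV_formula:
  assumes sm: "signed_measure M \<mu>" and h: "hahn_decomposition M \<mu> P N" and A: "A \<in> sets M"
  shows "total_variation M \<mu> A = \<mu> (A \<inter> P) - \<mu> (A \<inter> N)"
proof -
  have P: "P \<in> sets M" and N: "N \<in> sets M" and PN: "P \<inter> N = {}" and sp: "P \<union> N = space M"
    and pos: "\<And>X. X \<in> sets M \<Longrightarrow> X \<subseteq> P \<Longrightarrow> \<mu> X \<ge> 0"
    and neg: "\<And>X. X \<in> sets M \<Longrightarrow> X \<subseteq> N \<Longrightarrow> \<mu> X \<le> 0"
    using h by (auto simp: hahn_decomposition_def)
  have f0: "\<mu> {} = 0" using sm by (simp add: signed_measure_def)
  have split: "\<mu> X = \<mu> (X \<inter> P) + \<mu> (X \<inter> N)" if "X \<in> sets M" for X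
  proof -
    have "X = (X \<inter> P) \<union> (X \<inter> N)" using sets.sets_into_space[OF that] sp by auto
    hence "\<mu> X = \<mu> ((X \<inter> P) \<union> (X \<inter> N))" by simp
    also have "\<dots> = \<mu> (X \<inter> P) + \<mu> (X \<inter> N)"
      by (rule sm_add[OF sm]) (use that P N PN in auto)
    finally show ?thesis .
  qed
  define f1 where "f1 = (\<lambda>X. \<mu> (X \<inter> P))"
  define f2 where "f2 = (\<lambda>X. - \<mu> (X \<inter> N))"
  have a1: "addf M f1" unfolding addf_def f1_def
  proof (intro conjI ballI impI)
    fix X Y assume "X \<in> sets M" "Y \<in> sets M" "X \<inter> Y = {}"
    thus "\<mu> ((X \<union> Y) \<inter> P) = \<mu> (X \<inter> P) + \<mu> (Y \<inter> P)"
      using sm_add[OF sm, of "X \<inter> P" "Y \<inter> P"] P by (auto simp: Int_Un_distrib2)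
  qed (simp add: f0)
  have a2: "addf M f2" unfolding addf_def f2_def
  proof (intro conjI ballI impI)
    fix X Y assume "X \<in> sets M" "Y \<in> sets M" "X \<inter> Y = {}"
    hence e: "\<mu> ((X \<union> Y) \<inter> N) = \<mu> (X \<inter> N) + \<mu> (Y \<inter> N)"
      using sm_add[OF sm, of "X \<inter> N" "Y \<inter> N"] N by (auto simp: Int_Un_distrib2)
    show "- \<mu> ((X \<union> Y) \<inter> N) = - \<mu> (X \<inter> N) + - \<mu> (Y \<inter> N)"
      unfolding e by (rule alg_neg) (use \<open>X \<in> sets M\<close> \<open>Y \<in> sets M\<close> N neg in auto)
  qed (simp add: f0)
  show ?thesis unfolding total_variation_def
  proof (rule antisym)
    show "(SUP F \<in> {F. finite F \<and> F \<subseteq> sets M \<and> disjoint F \<and> \<Union>F \<subseteq> A}. \<Sum>B\<in>F. \<bar>\<mu> B\<bar>)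
        \<le> \<mu> (A \<inter> P) - \<mu> (A \<inter> N)"
    proof (rule SUP_least)
      fix F assume "F \<in> {F. finite F \<and> F \<subseteq> sets M \<and> disjoint F \<and> \<Union>F \<subseteq> A}"
      hence F: "finite F" "F \<subseteq> sets M" "disjoint F" "\<Union>F \<subseteq> A" by auto
      have UF: "\<Union>F \<in> sets M" using F by auto
      have "(\<Sum>B\<in>F. \<bar>\<mu> B\<bar>) \<le> (\<Sum>B\<in>F. f1 B + f2 B)"
      proof (rule sum_mono)
        fix B assume "B \<in> F"
        hence B: "B \<in> sets M" using F by auto
        show "\<bar>\<mu> B\<bar> \<le> f1 B + f2 B" unfolding f1_def f2_def split[OF B]
          by (rule alg_abs1(1)) (use B P N pos neg in auto)
      qed
      also have "\<dots> = (\<Sum>B\<in>F. f1 B) + (\<Sum>B\<in>F. f2 B)" by (rule sum.distrib)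
      also have "\<dots> = f1 (\<Union>F) + f2 (\<Union>F)" using addf_sum_set[OF a1 F(1-3)] addf_sum_set[OF a2 F(1-3)] by simp
      also have "\<dots> \<le> f1 A + f2 A"
      proof (rule add_mono)
        show "f1 (\<Union>F) \<le> f1 A" by (rule addf_mono[OF a1 UF A F(4)]) (use A UF P pos in \<open>auto simp: f1_def\<close>)
        show "f2 (\<Union>F) \<le> f2 A" by (rule addf_mono[OF a2 UF A F(4)]) (use A UF N neg in \<open>auto simp: f2_def\<close>)
      qed
      also have "\<dots> = \<mu> (A \<inter> P) - \<mu> (A \<inter> N)" by (simp add: f1_def f2_def minus_ereal_def)
      finally show "(\<Sum>B\<in>F. \<bar>\<mu> B\<bar>) \<le> \<mu> (A \<inter> P) - \<mu> (A \<inter> N)" .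
    qed
  next
    let ?F = "{A \<inter> P, A \<inter> N}"
    have mem: "?F \<in> {F. finite F \<and> F \<subseteq> sets M \<and> disjoint F \<and> \<Union>F \<subseteq> A}"
      using A P N PN by (auto simp: pairwise_def disjnt_def)
    have "\<mu> (A \<inter> P) - \<mu> (A \<inter> N) \<le> (\<Sum>B\<in>?F. \<bar>\<mu> B\<bar>)"
    proof (cases "A \<inter> P = A \<inter> N")
      case True
      hence "A \<inter> P = {}" "A \<inter> N = {}" using PN by auto
      thus ?thesis using f0 by simp
    next
      case False
      hence "(\<Sum>B\<in>?F. \<bar>\<mu> B\<bar>) = \<bar>\<mu> (A \<inter> P)\<bar> + \<bar>\<mu> (A \<inter> N)\<bar>" by simp
      also have "\<dots> = \<mu> (A \<inter> P) - \<mu> (A \<inter> N)" by (rule alg_abs1(2)) (use A P N pos neg in auto)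
      finally show ?thesis by simp
    qed
    also have "\<dots> \<le> (SUP F \<in> {F. finite F \<and> F \<subseteq> sets M \<and> disjoint F \<and> \<Union>F \<subseteq> A}. \<Sum>B\<in>F. \<bar>\<mu> B\<bar>)"
      by (rule SUP_upper[OF mem])
    finally show "\<mu> (A \<inter> P) - \<mu> (A \<inter> N) \<le> (SUP F \<in> {F. finite F \<and> F \<subseteq> sets M \<and> disjoint F \<and> \<Union>F \<subseteq> A}. \<Sum>B\<in>F. \<bar>\<mu> B\<bar>)" .
  qed
qed

lemma alg_add: fixes a b c d :: ereal
  assumes "(a \<noteq> \<infinity> \<and> b \<noteq> \<infinity> \<and> c \<noteq> \<infinity> \<and> d \<noteq> \<infinity>) \<or> (a \<noteq> -\<infinity> \<and> b \<noteq> -\<infinity> \<and> c \<noteq> -\<infinity> \<and> d \<noteq> -\<infinity>)"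
    "\<not> (\<bar>a\<bar> = \<infinity> \<and> \<bar>b\<bar> = \<infinity>)" "\<not> (\<bar>c\<bar> = \<infinity> \<and> \<bar>d\<bar> = \<infinity>)" "\<not> (\<bar>a + c\<bar> = \<infinity> \<and> \<bar>b + d\<bar> = \<infinity>)"
  shows "(a + c) - (b + d) = (a - b) + (c - d)"
  using assms by (cases a; cases b; cases c; cases d) auto

lemma TV_prime_le:
  assumes sm: "signed_measure M \<nu>" and P: "P \<in> sets M" and N: "N \<in> sets M" and PN: "P \<inter> N = {}"
  shows "total_variation M (\<lambda>A. \<nu> (A \<inter> P) - \<nu> (A \<inter> N)) C \<le> total_variation M \<nu> C"
  unfolding total_variation_def
proof (rule SUP_least)
  fix F assume "F \<in> {F. finite F \<and> F \<subseteq> sets M \<and> disjoint F \<and> \<Union>F \<subseteq> C}"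
  hence F: "finite F" "F \<subseteq> sets M" "disjoint F" "\<Union>F \<subseteq> C" by auto
  have f0: "\<nu> {} = 0" using sm by (simp add: signed_measure_def)
  let ?g = "\<lambda>G. \<bar>\<nu> G\<bar>"
  let ?F1 = "(\<lambda>B. B \<inter> P) ` F" and ?F2 = "(\<lambda>B. B \<inter> N) ` F"
  have dis: "B \<inter> B' = {}" if "B \<in> F" "B' \<in> F" "B \<noteq> B'" for B B'
    using F(3) that by (auto simp: pairwise_def disjnt_def)
  have "(\<Sum>B\<in>F. \<bar>\<nu> (B \<inter> P) - \<nu> (B \<inter> N)\<bar>) \<le> (\<Sum>B\<in>F. \<bar>\<nu> (B \<inter> P)\<bar> + \<bar>\<nu> (B \<inter> N)\<bar>)"
    by (rule sum_mono) (rule alg_tri)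
  also have "\<dots> = (\<Sum>B\<in>F. \<bar>\<nu> (B \<inter> P)\<bar>) + (\<Sum>B\<in>F. \<bar>\<nu> (B \<inter> N)\<bar>)" by (rule sum.distrib)
  also have "(\<Sum>B\<in>F. \<bar>\<nu> (B \<inter> P)\<bar>) = sum ?g ?F1"
  proof -
    have "sum ?g ?F1 = sum (?g \<circ> (\<lambda>B. B \<inter> P)) F"
    proof (rule sum.reindex_nontrivial[OF F(1)])
      fix x y assume "x \<in> F" "y \<in> F" "x \<noteq> y" "x \<inter> P = y \<inter> P"
      hence "x \<inter> P = {}" using dis by blast
      thus "\<bar>\<nu> (x \<inter> P)\<bar> = 0" using f0 by simp
    qed
    thus ?thesis by simp
  qed
  also have "(\<Sum>B\<in>F. \<bar>\<nu> (B \<inter> N)\<bar>) = sum ?g ?F2"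
  proof -
    have "sum ?g ?F2 = sum (?g \<circ> (\<lambda>B. B \<inter> N)) F"
    proof (rule sum.reindex_nontrivial[OF F(1)])
      fix x y assume "x \<in> F" "y \<in> F" "x \<noteq> y" "x \<inter> N = y \<inter> N"
      hence "x \<inter> N = {}" using dis by blast
      thus "\<bar>\<nu> (x \<inter> N)\<bar> = 0" using f0 by simp
    qed
    thus ?thesis by simp
  qed
  also have "sum ?g ?F1 + sum ?g ?F2 = sum ?g (?F1 \<union> ?F2) + sum ?g (?F1 \<inter> ?F2)"
    by (rule sum.union_inter[symmetric]) (use F(1) in auto)
  also have "sum ?g (?F1 \<inter> ?F2) = 0"
  proof (rule sum.neutral, rule ballI)
    fix G assume "G \<in> ?F1 \<inter> ?F2"
    hence "G = {}" using PN by auto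
    thus "\<bar>\<nu> G\<bar> = 0" using f0 by simp
  qed
  also have "sum ?g (?F1 \<union> ?F2) + 0 \<le> (SUP F \<in> {F. finite F \<and> F \<subseteq> sets M \<and> disjoint F \<and> \<Union>F \<subseteq> C}. \<Sum>B\<in>F. \<bar>\<nu> B\<bar>)"
  proof -
    have "?F1 \<union> ?F2 \<in> {F. finite F \<and> F \<subseteq> sets M \<and> disjoint F \<and> \<Union>F \<subseteq> C}"
    proof (intro CollectI conjI)
      show "finite (?F1 \<union> ?F2)" using F(1) by auto
      show "?F1 \<union> ?F2 \<subseteq> sets M" using F(2) P N by auto
      show "\<Union>(?F1 \<union> ?F2) \<subseteq> C" using F(4) by auto
      show "disjoint (?F1 \<union> ?F2)"
        unfolding pairwise_def disjnt_def
      proof (intro ballI impI)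
        fix G G' assume G: "G \<in> ?F1 \<union> ?F2" and G': "G' \<in> ?F1 \<union> ?F2" and ne: "G \<noteq> G'"
        from G obtain B S where B: "B \<in> F" "S = P \<or> S = N" "G = B \<inter> S" by auto
        from G' obtain B' S' where B': "B' \<in> F" "S' = P \<or> S' = N" "G' = B' \<inter> S'" by auto
        show "G \<inter> G' = {}"
        proof (cases "B = B'")
          case True
          thus ?thesis using B B' ne PN by auto
        next
          case False
          thus ?thesis using dis[OF B(1) B'(1)] B B' by auto
        qed
      qed
    qed
    thus ?thesis by (simp add: SUP_upper)
  qed
  finally show "(\<Sum>B\<in>F. \<bar>\<nu> (B \<inter> P) - \<nu> (B \<inter> N)\<bar>) \<le> (SUP F \<in> {F. finite F \<and> F \<subseteq> sets M \<and> disjoint F \<and> \<Union>F \<subseteq> C}. \<Sum>B\<in>F. \<bar>\<nu> B\<bar>)" .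
qed

lemma alg_s1: fixes x y :: ereal shows "x \<noteq> \<infinity> \<Longrightarrow> x - y = \<infinity> \<Longrightarrow> y = -\<infinity>"
  by (cases x; cases y) auto
lemma alg_s2: fixes u v :: ereal shows "u \<noteq> \<infinity> \<Longrightarrow> v \<noteq> \<infinity> \<Longrightarrow> u - v = -\<infinity> \<Longrightarrow> u = -\<infinity>"
  by (cases u; cases v) auto
lemma alg_s3: fixes x y :: ereal shows "y \<noteq> -\<infinity> \<Longrightarrow> x - y = \<infinity> \<Longrightarrow> x = \<infinity>"
  by (cases x; cases y) auto
lemma alg_s4: fixes u v :: ereal shows "u \<noteq> -\<infinity> \<Longrightarrow> v \<noteq> -\<infinity> \<Longrightarrow> u - v = -\<infinity> \<Longrightarrow> v = \<infinity>"
  by (cases u; cases v) auto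

theorem lemma1p1:
  fixes M :: "'a measure" and \<mu> \<nu> :: "'a set \<Rightarrow> ereal" and Pos Neg :: "'a set"
  assumes "sigma_finite_signed_measure M \<mu>"
    and "hahn_decomposition M \<mu> Pos Neg"
    and "sigma_finite_signed_measure M \<nu>"
    and "\<forall>A\<in>sets M. \<not> (\<bar>\<nu> (A \<inter> Pos)\<bar> = \<infinity> \<and> \<bar>\<nu> (A \<inter> Neg)\<bar> = \<infinity>)"
  defines "\<nu>' \<equiv> (\<lambda>A. \<nu> (A \<inter> Pos) - \<nu> (A \<inter> Neg))"
  shows "sigma_finite_signed_measure M \<nu>'
    \<and> (cond_L M \<mu> \<nu> \<longleftrightarrow> cond_L M (total_variation M \<mu>) \<nu>')
    \<and> (cond_O M \<mu> \<nu> \<longleftrightarrow> cond_O M (total_variation M \<mu>) \<nu>')"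
proof -
  note h = assms(2)
  have smu: "signed_measure M \<mu>" using assms(1) by (simp add: sigma_finite_signed_measure_def)
  have snu: "signed_measure M \<nu>" using assms(3) by (simp add: sigma_finite_signed_measure_def)
  have P: "Pos \<in> sets M" and N: "Neg \<in> sets M" and PN: "Pos \<inter> Neg = {}" and sp: "Pos \<union> Neg = space M"
    and pos: "\<And>X. X \<in> sets M \<Longrightarrow> X \<subseteq> Pos \<Longrightarrow> \<mu> X \<ge> 0"
    and neg: "\<And>X. X \<in> sets M \<Longrightarrow> X \<subseteq> Neg \<Longrightarrow> \<mu> X \<le> 0"
    using h by (auto simp: hahn_decomposition_def)
  have A4: "\<And>X. X \<in> sets M \<Longrightarrow> \<not> (\<bar>\<nu> (X \<inter> Pos)\<bar> = \<infinity> \<and> \<bar>\<nu> (X \<inter> Neg)\<bar> = \<infinity>)"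
    using assms(4) by auto
  have musgn: "(\<forall>X\<in>sets M. \<mu> X \<noteq> \<infinity>) \<or> (\<forall>X\<in>sets M. \<mu> X \<noteq> -\<infinity>)"
    using smu by (auto simp: signed_measure_def)
  have nusgn: "(\<forall>X\<in>sets M. \<nu> X \<noteq> \<infinity>) \<or> (\<forall>X\<in>sets M. \<nu> X \<noteq> -\<infinity>)"
    using snu by (auto simp: signed_measure_def)
  have split: "\<And>f X. signed_measure M f \<Longrightarrow> X \<in> sets M \<Longrightarrow> f X = f (X \<inter> Pos) + f (X \<inter> Neg)"
  proof -
    fix f X assume sm: "signed_measure M f" and X: "X \<in> sets M"
    have "X = (X \<inter> Pos) \<union> (X \<inter> Neg)" using sets.sets_into_space[OF X] sp by auto
    hence "f X = f ((X \<inter> Pos) \<union> (X \<inter> Neg))" by simp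
    also have "\<dots> = f (X \<inter> Pos) + f (X \<inter> Neg)"
      by (rule sm_add[OF sm]) (use X P N PN in auto)
    finally show "f X = f (X \<inter> Pos) + f (X \<inter> Neg)" .
  qed
  define mix where "mix = (\<lambda>X Y. (X \<inter> Pos) \<union> (Y \<inter> Neg))"
  have mix_sets: "mix X Y \<in> sets M" if "X \<in> sets M" "Y \<in> sets M" for X Y
    using that P N by (auto simp: mix_def)
  have mixP: "mix X Y \<inter> Pos = X \<inter> Pos" and mixN: "mix X Y \<inter> Neg = Y \<inter> Neg" for X Y
    using PN by (auto simp: mix_def)
  have TV: "total_variation M \<mu> X = \<mu> (X \<inter> Pos) - \<mu> (X \<inter> Neg)" if "X \<in> sets M" for X
    by (rule TV_formula[OF smu h that])
  have mu_mix: "\<mu> (mix X Y) = \<mu> (X \<inter> Pos) + \<mu> (Y \<inter> Neg)" if "X \<in> sets M" "Y \<in> sets M" for X Y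
    using split[OF smu mix_sets[OF that]] by (simp add: mixP mixN)
  have nu_mix: "\<nu> (mix X Y) = \<nu> (X \<inter> Pos) + \<nu> (Y \<inter> Neg)" if "X \<in> sets M" "Y \<in> sets M" for X Y
    using split[OF snu mix_sets[OF that]] by (simp add: mixP mixN)
  have TV_mix: "total_variation M \<mu> (mix X Y) = \<mu> (X \<inter> Pos) - \<mu> (Y \<inter> Neg)" if "X \<in> sets M" "Y \<in> sets M" for X Y
    using TV[OF mix_sets[OF that]] by (simp add: mixP mixN)
  have nu'_mix: "\<nu>' (mix X Y) = \<nu> (X \<inter> Pos) - \<nu> (Y \<inter> Neg)" for X Y
    by (simp add: \<nu>'_def mixP mixN)
  have pge: "\<mu> (X \<inter> Pos) \<ge> 0" and nle: "\<mu> (X \<inter> Neg) \<le> 0" if "X \<in> sets M" for X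
    using pos[of "X \<inter> Pos"] neg[of "X \<inter> Neg"] that P N by auto
  have musgn4: "(\<mu> (A \<inter> Pos) \<noteq> \<infinity> \<and> \<mu> (B \<inter> Pos) \<noteq> \<infinity> \<and> \<mu> (A \<inter> Neg) \<noteq> \<infinity> \<and> \<mu> (B \<inter> Neg) \<noteq> \<infinity>) \<or>
      (\<mu> (A \<inter> Pos) \<noteq> -\<infinity> \<and> \<mu> (B \<inter> Pos) \<noteq> -\<infinity> \<and> \<mu> (A \<inter> Neg) \<noteq> -\<infinity> \<and> \<mu> (B \<inter> Neg) \<noteq> -\<infinity>)"
    if "A \<in> sets M" "B \<in> sets M" for A B
    using musgn that P N by auto
  have nusgn4: "(\<nu> (A \<inter> Pos) \<noteq> \<infinity> \<and> \<nu> (B \<inter> Pos) \<noteq> \<infinity> \<and> \<nu> (A \<inter> Neg) \<noteq> \<infinity> \<and> \<nu> (B \<inter> Neg) \<noteq> \<infinity>) \<or>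
      (\<nu> (A \<inter> Pos) \<noteq> -\<infinity> \<and> \<nu> (B \<inter> Pos) \<noteq> -\<infinity> \<and> \<nu> (A \<inter> Neg) \<noteq> -\<infinity> \<and> \<nu> (B \<inter> Neg) \<noteq> -\<infinity>)"
    if "A \<in> sets M" "B \<in> sets M" for A B
    using nusgn that P N by auto
  have LL: "cond_L M \<mu> \<nu> \<longleftrightarrow> cond_L M (total_variation M \<mu>) \<nu>'"
  proof
    assume L: "cond_L M \<mu> \<nu>"
    show "cond_L M (total_variation M \<mu>) \<nu>'" unfolding cond_L_def
    proof (intro ballI impI)
      fix A B assume A: "A \<in> sets M" and B: "B \<in> sets M"
        and e: "total_variation M \<mu> A = total_variation M \<mu> B \<and> \<bar>total_variation M \<mu> A\<bar> \<noteq> \<infinity>"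
      have "\<mu> (A \<inter> Pos) + \<mu> (B \<inter> Neg) = \<mu> (B \<inter> Pos) + \<mu> (A \<inter> Neg) \<and> \<bar>\<mu> (A \<inter> Pos) + \<mu> (B \<inter> Neg)\<bar> \<noteq> \<infinity>"
        by (rule alg_L1) (use e TV[OF A] TV[OF B] pge[OF A] pge[OF B] nle[OF A] nle[OF B] in auto)
      hence "\<mu> (mix A B) = \<mu> (mix B A) \<and> \<bar>\<mu> (mix A B)\<bar> \<noteq> \<infinity>" by (metis mu_mix[OF A B] mu_mix[OF B A])
      hence "\<nu> (mix A B) = \<nu> (mix B A) \<and> \<bar>\<nu> (mix A B)\<bar> \<noteq> \<infinity>"
        by (rule L[unfolded cond_L_def, rule_format, OF mix_sets[OF A B] mix_sets[OF B A]])
      hence "\<nu> (A \<inter> Pos) + \<nu> (B \<inter> Neg) = \<nu> (B \<inter> Pos) + \<nu> (A \<inter> Neg) \<and> \<bar>\<nu> (A \<inter> Pos) + \<nu> (B \<inter> Neg)\<bar> \<noteq> \<infinity>"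
        by (metis nu_mix[OF A B] nu_mix[OF B A])
      from alg_L2[OF conjunct1[OF this] conjunct2[OF this]]
      show "\<nu>' A = \<nu>' B \<and> \<bar>\<nu>' A\<bar> \<noteq> \<infinity>" unfolding \<nu>'_def .
    qed
  next
    assume L: "cond_L M (total_variation M \<mu>) \<nu>'"
    show "cond_L M \<mu> \<nu>" unfolding cond_L_def
    proof (intro ballI impI)
      fix A B assume A: "A \<in> sets M" and B: "B \<in> sets M"
        and e: "\<mu> A = \<mu> B \<and> \<bar>\<mu> A\<bar> \<noteq> \<infinity>"
      have "\<mu> (A \<inter> Pos) - \<mu> (B \<inter> Neg) = \<mu> (B \<inter> Pos) - \<mu> (A \<inter> Neg) \<and> \<bar>\<mu> (A \<inter> Pos) - \<mu> (B \<inter> Neg)\<bar> \<noteq> \<infinity>"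
        by (rule alg_L3) (use e split[OF smu A] split[OF smu B] pge[OF A] pge[OF B] nle[OF A] nle[OF B] in auto)
      hence "total_variation M \<mu> (mix A B) = total_variation M \<mu> (mix B A) \<and> \<bar>total_variation M \<mu> (mix A B)\<bar> \<noteq> \<infinity>"
        by (metis TV_mix[OF A B] TV_mix[OF B A])
      hence "\<nu>' (mix A B) = \<nu>' (mix B A) \<and> \<bar>\<nu>' (mix A B)\<bar> \<noteq> \<infinity>"
        by (rule L[unfolded cond_L_def, rule_format, OF mix_sets[OF A B] mix_sets[OF B A]])
      hence "\<nu> (A \<inter> Pos) - \<nu> (B \<inter> Neg) = \<nu> (B \<inter> Pos) - \<nu> (A \<inter> Neg) \<and> \<bar>\<nu> (A \<inter> Pos) - \<nu> (B \<inter> Neg)\<bar> \<noteq> \<infinity>"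
        by (metis nu'_mix)
      from alg_L4[OF conjunct1[OF this] conjunct2[OF this]]
      show "\<nu> A = \<nu> B \<and> \<bar>\<nu> A\<bar> \<noteq> \<infinity>" unfolding split[OF snu A] split[OF snu B] .
    qed
  qed
  have OO: "(\<forall>A\<in>sets M. \<forall>B\<in>sets M. \<mu> A \<le> \<mu> B \<longrightarrow> \<nu> A \<le> \<nu> B) \<longleftrightarrow>
     (\<forall>A\<in>sets M. \<forall>B\<in>sets M. total_variation M \<mu> A \<le> total_variation M \<mu> B \<longrightarrow> \<nu>' A \<le> \<nu>' B)"
  proof
    assume O: "\<forall>A\<in>sets M. \<forall>B\<in>sets M. \<mu> A \<le> \<mu> B \<longrightarrow> \<nu> A \<le> \<nu> B"
    show "\<forall>A\<in>sets M. \<forall>B\<in>sets M. total_variation M \<mu> A \<le> total_variation M \<mu> B \<longrightarrow> \<nu>' A \<le> \<nu>' B"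
    proof (intro ballI impI)
      fix A B assume A: "A \<in> sets M" and B: "B \<in> sets M"
        and e: "total_variation M \<mu> A \<le> total_variation M \<mu> B"
      have "\<mu> (A \<inter> Pos) + \<mu> (B \<inter> Neg) \<le> \<mu> (B \<inter> Pos) + \<mu> (A \<inter> Neg)"
        by (rule alg_O3) (use e TV[OF A] TV[OF B] pge[OF A] pge[OF B] nle[OF A] nle[OF B] musgn4[OF A B] in auto)
      hence "\<mu> (mix A B) \<le> \<mu> (mix B A)" by (simp add: mu_mix A B)
      hence "\<nu> (mix A B) \<le> \<nu> (mix B A)"
        by (rule O[rule_format, OF mix_sets[OF A B] mix_sets[OF B A]])
      hence "\<nu> (A \<inter> Pos) + \<nu> (B \<inter> Neg) \<le> \<nu> (B \<inter> Pos) + \<nu> (A \<inter> Neg)"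
        by (simp add: nu_mix A B)
      hence "\<nu> (A \<inter> Pos) - \<nu> (A \<inter> Neg) \<le> \<nu> (B \<inter> Pos) - \<nu> (B \<inter> Neg)"
        by (rule alg_O4[rotated 3]) (use nusgn4[OF A B] A4[OF A] A4[OF B] in auto)
      thus "\<nu>' A \<le> \<nu>' B" by (simp add: \<nu>'_def)
    qed
  next
    assume O: "\<forall>A\<in>sets M. \<forall>B\<in>sets M. total_variation M \<mu> A \<le> total_variation M \<mu> B \<longrightarrow> \<nu>' A \<le> \<nu>' B"
    show "\<forall>A\<in>sets M. \<forall>B\<in>sets M. \<mu> A \<le> \<mu> B \<longrightarrow> \<nu> A \<le> \<nu> B"
    proof (intro ballI impI)
      fix A B assume A: "A \<in> sets M" and B: "B \<in> sets M" and e: "\<mu> A \<le> \<mu> B"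
      have "\<mu> (A \<inter> Pos) - \<mu> (B \<inter> Neg) \<le> \<mu> (B \<inter> Pos) - \<mu> (A \<inter> Neg)"
        by (rule alg_O1) (use e split[OF smu A] split[OF smu B] pge[OF A] pge[OF B] nle[OF A] nle[OF B] in auto)
      hence "total_variation M \<mu> (mix A B) \<le> total_variation M \<mu> (mix B A)" by (simp add: TV_mix A B)
      hence "\<nu>' (mix A B) \<le> \<nu>' (mix B A)"
        by (rule O[rule_format, OF mix_sets[OF A B] mix_sets[OF B A]])
      hence "\<nu> (A \<inter> Pos) - \<nu> (B \<inter> Neg) \<le> \<nu> (B \<inter> Pos) - \<nu> (A \<inter> Neg)"
        by (simp add: nu'_mix)
      hence "\<nu> (A \<inter> Pos) + \<nu> (A \<inter> Neg) \<le> \<nu> (B \<inter> Pos) + \<nu> (B \<inter> Neg)"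
        by (rule alg_O2[rotated 3]) (use nusgn4[OF A B] A4[OF A] A4[OF B] in auto)
      thus "\<nu> A \<le> \<nu> B" by (simp add: split[OF snu A] split[OF snu B])
    qed
  qed
  have SM: "sigma_finite_signed_measure M \<nu>'"
  proof -
    have nu0: "\<nu> {} = 0" using snu by (simp add: signed_measure_def)
    have gadd: "\<nu> ((X \<union> Y) \<inter> S) = \<nu> (X \<inter> S) + \<nu> (Y \<inter> S)"
      if "X \<in> sets M" "Y \<in> sets M" "X \<inter> Y = {}" "S \<in> sets M" for X Y S
      using sm_add[OF snu, of "X \<inter> S" "Y \<inter> S"] that by (auto simp: Int_Un_distrib2)
    have aS: "addf M (\<lambda>X. \<nu> (X \<inter> S))" if "S \<in> sets M" for S
      unfolding addf_def using gadd that nu0 by auto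
    have a': "addf M \<nu>'" unfolding addf_def
    proof (intro conjI ballI impI)
      show "\<nu>' {} = 0" by (simp add: \<nu>'_def nu0)
      fix X Y assume X: "X \<in> sets M" and Y: "Y \<in> sets M" and d: "X \<inter> Y = {}"
      have XY: "X \<union> Y \<in> sets M" using X Y by auto
      show "\<nu>' (X \<union> Y) = \<nu>' X + \<nu>' Y"
        unfolding \<nu>'_def gadd[OF X Y d P] gadd[OF X Y d N]
        by (rule alg_add) (use nusgn4[OF X Y] A4[OF X] A4[OF Y] A4[OF XY, unfolded gadd[OF X Y d P] gadd[OF X Y d N]] in auto)
    qed
    have sgn': "\<not> (\<exists>A\<in>sets M. \<nu>' A = \<infinity>) \<or> \<not> (\<exists>A\<in>sets M. \<nu>' A = -\<infinity>)"
    proof (rule ccontr)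
      assume "\<not> ?thesis"
      then obtain A B where A: "A \<in> sets M" and B: "B \<in> sets M" and a: "\<nu>' A = \<infinity>" and b: "\<nu>' B = -\<infinity>"
        by auto
      have AB: "A - B \<in> sets M" and BA: "B - A \<in> sets M" using A B by auto
      define C where "C = A \<union> B"
      have C: "C \<in> sets M" using A B by (auto simp: C_def)
      have C1: "C = B \<union> (A - B)" and C2: "C = A \<union> (B - A)" by (auto simp: C_def)
      have d1: "B \<inter> (A - B) = {}" and d2: "A \<inter> (B - A) = {}" by auto
      have CP1: "\<nu> (C \<inter> Pos) = \<nu> (B \<inter> Pos) + \<nu> ((A - B) \<inter> Pos)"
        unfolding C1 by (rule gadd[OF B AB d1 P])
      have CN2: "\<nu> (C \<inter> Neg) = \<nu> (A \<inter> Neg) + \<nu> ((B - A) \<inter> Neg)"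
        unfolding C2 by (rule gadd[OF A BA d2 N])
      have CP2: "\<nu> (C \<inter> Pos) = \<nu> (A \<inter> Pos) + \<nu> ((B - A) \<inter> Pos)"
        unfolding C2 by (rule gadd[OF A BA d2 P])
      have CN1: "\<nu> (C \<inter> Neg) = \<nu> (B \<inter> Neg) + \<nu> ((A - B) \<inter> Neg)"
        unfolding C1 by (rule gadd[OF B AB d1 N])
      have a': "\<nu> (A \<inter> Pos) - \<nu> (A \<inter> Neg) = \<infinity>" using a by (simp add: \<nu>'_def)
      have b': "\<nu> (B \<inter> Pos) - \<nu> (B \<inter> Neg) = -\<infinity>" using b by (simp add: \<nu>'_def)
      from nusgn show False
      proof
        assume h: "\<forall>X\<in>sets M. \<nu> X \<noteq> \<infinity>"
        have "\<nu> (A \<inter> Neg) = -\<infinity>" by (rule alg_s1[OF _ a']) (use h A P in auto)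
        hence "\<nu> (C \<inter> Neg) = -\<infinity>" using CN2 h BA N by auto
        moreover have "\<nu> (B \<inter> Pos) = -\<infinity>" by (rule alg_s2[OF _ _ b']) (use h B P N in auto)
        hence "\<nu> (C \<inter> Pos) = -\<infinity>" using CP1 h AB P by auto
        ultimately show False using A4[OF C] by simp
      next
        assume h: "\<forall>X\<in>sets M. \<nu> X \<noteq> -\<infinity>"
        have "\<nu> (A \<inter> Pos) = \<infinity>" by (rule alg_s3[OF _ a']) (use h A N in auto)
        hence "\<nu> (C \<inter> Pos) = \<infinity>" using CP2 by auto
        moreover have "\<nu> (B \<inter> Neg) = \<infinity>" by (rule alg_s4[OF _ _ b']) (use h B P N in auto)
        hence "\<nu> (C \<inter> Neg) = \<infinity>" using CN1 by auto
        ultimately show False using A4[OF C] by simp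
      qed
    qed
    have ca: "\<forall>A :: nat \<Rightarrow> 'a set. range A \<subseteq> sets M \<longrightarrow> disjoint_family A \<longrightarrow>
        (\<lambda>n. \<nu>' (A n)) sums \<nu>' (\<Union>n. A n)"
    proof (intro allI impI)
      fix A :: "nat \<Rightarrow> 'a set" assume r: "range A \<subseteq> sets M" and d: "disjoint_family A"
      have U: "(\<Union>n. A n) \<in> sets M" using r by auto
      have sS: "(\<lambda>n. \<nu> (A n \<inter> S)) sums \<nu> ((\<Union>n. A n) \<inter> S)" if S: "S \<in> sets M" for S
      proof -
        have "range (\<lambda>n. A n \<inter> S) \<subseteq> sets M" using r S by auto
        moreover have "disjoint_family (\<lambda>n. A n \<inter> S)" using d by (auto simp: disjoint_family_on_def)
        ultimately have "(\<lambda>n. \<nu> (A n \<inter> S)) sums \<nu> (\<Union>n. A n \<inter> S)"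
          using snu unfolding signed_measure_def by (elim conjE allE impE)
        moreover have "(\<Union>n. A n \<inter> S) = (\<Union>n. A n) \<inter> S" by auto
        ultimately show ?thesis by simp
      qed
      have lim: "(\<lambda>n. (\<Sum>i<n. \<nu> (A i \<inter> Pos)) + - (\<Sum>i<n. \<nu> (A i \<inter> Neg)))
          \<longlonglongrightarrow> \<nu> ((\<Union>n. A n) \<inter> Pos) + - \<nu> ((\<Union>n. A n) \<inter> Neg)"
      proof (rule tendsto_add_ereal_general)
        show "\<not> ((\<nu> ((\<Union>n. A n) \<inter> Pos) = \<infinity> \<and> - \<nu> ((\<Union>n. A n) \<inter> Neg) = -\<infinity>) \<or>
            (\<nu> ((\<Union>n. A n) \<inter> Pos) = -\<infinity> \<and> - \<nu> ((\<Union>n. A n) \<inter> Neg) = \<infinity>))"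
          using A4[OF U] by auto
        show "(\<lambda>n. \<Sum>i<n. \<nu> (A i \<inter> Pos)) \<longlonglongrightarrow> \<nu> ((\<Union>n. A n) \<inter> Pos)"
          using sS[OF P] by (simp add: sums_def)
        show "(\<lambda>n. - (\<Sum>i<n. \<nu> (A i \<inter> Neg))) \<longlonglongrightarrow> - \<nu> ((\<Union>n. A n) \<inter> Neg)"
          using sS[OF N] by (intro tendsto_uminus_ereal) (simp add: sums_def)
      qed
      have eq: "(\<Sum>i<n. \<nu>' (A i)) = (\<Sum>i<n. \<nu> (A i \<inter> Pos)) + - (\<Sum>i<n. \<nu> (A i \<inter> Neg))" for n
        using addf_sum_nat[OF a' r d, of n] addf_sum_nat[OF aS[OF P] r d, of n] addf_sum_nat[OF aS[OF N] r d, of n]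
        by (simp add: \<nu>'_def minus_ereal_def)
      show "(\<lambda>n. \<nu>' (A n)) sums \<nu>' (\<Union>n. A n)"
        unfolding sums_def eq using lim by (simp add: \<nu>'_def minus_ereal_def)
    qed
    have sm': "signed_measure M \<nu>'"
      unfolding signed_measure_def using a' sgn' ca by (simp add: addf_def)
    obtain C :: "nat \<Rightarrow> 'a set" where C: "range C \<subseteq> sets M" "(\<Union>n. C n) = space M"
      "\<forall>n. total_variation M \<nu> (C n) < \<infinity>"
      using assms(3) by (auto simp: sigma_finite_signed_measure_def)
    have "total_variation M \<nu>' (C n) < \<infinity>" for n
      using TV_prime_le[OF snu P N PN, of "C n"] C(3) unfolding \<nu>'_def by (meson order.strict_trans1)
    thus ?thesis using sm' C(1,2) unfolding sigma_finite_signed_measure_def by blast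
  qed
  show ?thesis using SM LL OO by (simp add: cond_O_def)
qed

end
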